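(* If $K\colon\mathbb{E}(D)\to\mathbb{E}(D')$ is affine, then $\mathsf{D}K$ is linear, i.e. $\mathsf{D}K(\eta_1+\eta_2)=\mathsf{D}K(\eta_1)+\mathsf{D}K(\eta_2)$ and $\mathsf{D}K(\alpha\eta)=\alpha\,\mathsf{D}K(\eta)$ for all $\eta,\eta_1,\eta_2\in\mathbb{E}(D)$ and $\alpha\in[0,\infty)$.
   Context: $\mathbb{E}(D)$ is the set of functions $D\to[0,\infty]$ with pointwise order and pointwise operations, where $\infty+x=x+\infty=\infty$, $0\cdot\infty=0$, $r\cdot\infty=\infty$ for $r>0$; for $x\ge y$ in $[0,\infty]$, $x-y$ is the least $z\in[0,\infty]$ with $x=y+z$ (so $\infty-\infty=0$, $\infty-z=\infty$ for $z<\infty$). $K$ is affine if $K(\alpha\eta_1+(1-\alpha)\eta_2)=\alpha K(\eta_1)+(1-\alpha)K(\eta_2)$ for all $\eta_1,\eta_2$ and $\alpha\in[0,1]$. The linear part of $K$ is $(\mathsf{D}K)(\eta)=K(\eta)-K(\mathbb{O})$ (pointwise), where $\mathbb{O}$ is the constant zero function. *)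

theory Defs
  imports "HOL-Library.Extended_Nonnegative_Real"
begin

definition esub :: "ennreal \<Rightarrow> ennreal \<Rightarrow> ennreal" where
  "esub x y = (LEAST z. x = y + z)"

text \<open>Affine maps E(D) \<rightarrow> E(D'), functions represented as 'd \<Rightarrow> ennreal with pointwise operations.\<close>
definition affine_K :: "(('d \<Rightarrow> ennreal) \<Rightarrow> ('e \<Rightarrow> ennreal)) \<Rightarrow> bool" where
  "affine_K K \<longleftrightarrow> (\<forall>\<eta>1 \<eta>2 (a::real). 0 \<le> a \<and> a \<le> 1 \<longrightarrow>
      K (\<lambda>x. ennreal a * \<eta>1 x + ennreal (1 - a) * \<eta>2 x)
      = (\<lambda>y. ennreal a * K \<eta>1 y + ennreal (1 - a) * K \<eta>2 y))"

definition linpart :: "(('d \<Rightarrow> ennreal) \<Rightarrow> ('e \<Rightarrow> ennreal)) \<Rightarrow> ('d \<Rightarrow> ennreal) \<Rightarrow> ('e \<Rightarrow> ennreal)" where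
  "linpart K \<eta> = (\<lambda>y. esub (K \<eta> y) (K (\<lambda>_. 0) y))"

end

theory Submission
  imports Defs
begin

lemma esub_char:
  assumes "y \<noteq> top" "x = y + w" shows "esub x y = w"
  unfolding esub_def
proof (rule Least_equality)
  show "x = y + w" by fact
  fix z assume "x = y + z"
  then have "y + w = y + z" using assms by simp
  then have "w = z" using assms(1) by (simp add: ennreal_add_left_cancel)
  then show "w \<le> z" by simp
qed

lemma esub_top: "esub top top = 0"
  unfolding esub_def by (rule Least_equality) auto

lemma affI:
  assumes "affine_K K" "0 \<le> a" "a \<le> 1"
  shows "K (\<lambda>x. ennreal a * f x + ennreal (1 - a) * g x) = (\<lambda>y. ennreal a * K f y + ennreal (1 - a) * K g y)"
  using assms unfolding affine_K_def by blast

lemma affA: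
  assumes "affine_K K" "0 \<le> a" "a \<le> 1"
  shows "K (\<lambda>x. ennreal a * \<eta> x) y = ennreal a * K \<eta> y + ennreal (1-a) * K (\<lambda>_. 0) y"
proof -
  have "K (\<lambda>x. ennreal a * \<eta> x + ennreal (1 - a) * (\<lambda>_. 0) x)
      = (\<lambda>y. ennreal a * K \<eta> y + ennreal (1 - a) * K (\<lambda>_. 0) y)"
    using affI[OF assms(1), of a "\<eta>" "\<lambda>_. 0"] assms(2,3) by simp
  then show ?thesis by simp
qed

lemma affB:
  assumes "affine_K K"
  shows "K (\<lambda>x. \<eta>1 x + \<eta>2 x) y + K (\<lambda>_. 0) y = K \<eta>1 y + K \<eta>2 y"
proof -
  have "K (\<lambda>x. ennreal (1/2) * \<eta>1 x + ennreal (1 - 1/2) * \<eta>2 x)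
      = (\<lambda>y. ennreal (1/2) * K \<eta>1 y + ennreal (1 - 1/2) * K \<eta>2 y)"
    using affI[OF assms(1), of "1/2" "\<eta>1" "\<eta>2"] by simp
  hence 1: "K (\<lambda>x. ennreal (1/2) * \<eta>1 x + ennreal (1/2) * \<eta>2 x) y
      = ennreal (1/2) * K \<eta>1 y + ennreal (1/2) * K \<eta>2 y" by (simp add: fun_eq_iff)
  have 2: "K (\<lambda>x. ennreal (1/2) * (\<eta>1 x + \<eta>2 x)) y
      = ennreal (1/2) * K (\<lambda>x. \<eta>1 x + \<eta>2 x) y + ennreal (1/2) * K (\<lambda>_. 0) y"
    using affA[OF assms, of "1/2" "\<lambda>x. \<eta>1 x + \<eta>2 x" y] by simp
  have "ennreal (1/2) * (K (\<lambda>x. \<eta>1 x + \<eta>2 x) y + K (\<lambda>_. 0) y)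
      = ennreal (1/2) * (K \<eta>1 y + K \<eta>2 y)"
    using 1 2 by (simp add: distrib_left)
  then have "ennreal 2 * (ennreal (1/2) * (K (\<lambda>x. \<eta>1 x + \<eta>2 x) y + K (\<lambda>_. 0) y))
      = ennreal 2 * (ennreal (1/2) * (K \<eta>1 y + K \<eta>2 y))" by simp
  moreover have "ennreal 2 * ennreal (1/2) = 1" by (subst ennreal_mult[symmetric]) auto
  ultimately show ?thesis by (simp add: mult.assoc[symmetric])
qed


lemma inv_cancel: "(a::real) > 0 \<Longrightarrow> ennreal a * (ennreal (1/a) * x) = x"
  by (simp add: mult.assoc[symmetric] ennreal_mult[symmetric])

lemma affC:
  assumes "affine_K K"
  shows "K (\<lambda>_. 0) y \<le> K \<eta> y"
proof (rule ennreal_approx_unit)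
  fix b :: ennreal assume b: "0 < b" "b < 1"
  then obtain r where r: "b = ennreal r" "0 < r" "r < 1"
    by (metis ennreal_cases ennreal_less_zero_iff ennreal_less_one_iff less_irrefl not_less top_greatest)
  define a where "a = 1 - r"
  have a: "0 < a" "a \<le> 1" "1 - a = r" using r by (auto simp: a_def)
  have "K (\<lambda>x. ennreal a * (ennreal (1/a) * \<eta> x)) y
     = ennreal a * K (\<lambda>x. ennreal (1/a) * \<eta> x) y + ennreal (1-a) * K (\<lambda>_. 0) y"
    using affA[OF assms, of a] a by simp
  then have "K \<eta> y = ennreal a * K (\<lambda>x. ennreal (1/a) * \<eta> x) y + b * K (\<lambda>_. 0) y"
    using a r inv_cancel[of a] by simp
  then show "b * K (\<lambda>_. 0) y \<le> K \<eta> y" by (metis add.commute le_iff_add)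
qed

lemma decomp:
  assumes "affine_K K" "K (\<lambda>_. 0) y \<noteq> top"
  shows "K \<eta> y = K (\<lambda>_. 0) y + linpart K \<eta> y"
proof -
  obtain w where w: "K \<eta> y = K (\<lambda>_. 0) y + w" using affC[OF assms(1)] le_iff_add by blast
  then have "linpart K \<eta> y = w" unfolding linpart_def using esub_char[OF assms(2) w] by simp
  with w show ?thesis by simp
qed

lemma cancel2:
  assumes "(z::ennreal) \<noteq> top" "z + u = z + v" shows "u = v"
  using assms by (simp add: ennreal_add_left_cancel)

lemma scale01:
  assumes "affine_K K" "K (\<lambda>_. 0) y \<noteq> top" "0 \<le> a" "a \<le> 1"
  shows "linpart K (\<lambda>x. ennreal a * \<eta> x) y = ennreal a * linpart K \<eta> y"
proof -
  let ?z = "K (\<lambda>_. 0) y"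
  have "?z + linpart K (\<lambda>x. ennreal a * \<eta> x) y = K (\<lambda>x. ennreal a * \<eta> x) y"
    using decomp[OF assms(1,2), of "\<lambda>x. ennreal a * \<eta> x"] by simp
  also have "\<dots> = ennreal a * (?z + linpart K \<eta> y) + ennreal (1-a) * ?z"
    using affA[OF assms(1,3,4)] decomp[OF assms(1,2), of \<eta>] by simp
  also have "\<dots> = (ennreal a + ennreal (1-a)) * ?z + ennreal a * linpart K \<eta> y"
    by (simp add: algebra_simps)
  also have "ennreal a + ennreal (1-a) = 1"
    using assms(3,4) by (subst ennreal_plus[symmetric]) auto
  finally have "?z + linpart K (\<lambda>x. ennreal a * \<eta> x) y = ?z + ennreal a * linpart K \<eta> y"
    by simp
  then show ?thesis by (rule cancel2[OF assms(2)])
qed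

theorem lemma3p2:
  fixes K :: "('d \<Rightarrow> ennreal) \<Rightarrow> ('e \<Rightarrow> ennreal)"
  assumes "affine_K K"
  shows "(\<forall>\<eta>1 \<eta>2. linpart K (\<lambda>x. \<eta>1 x + \<eta>2 x) = (\<lambda>y. linpart K \<eta>1 y + linpart K \<eta>2 y))
       \<and> (\<forall>\<eta> (a::real). 0 \<le> a \<longrightarrow> linpart K (\<lambda>x. ennreal a * \<eta> x) = (\<lambda>y. ennreal a * linpart K \<eta> y))"
proof -
  have top: "linpart K \<eta> y = 0" if "K (\<lambda>_. 0) y = top" for \<eta> y
  proof -
    have "K \<eta> y = top" using affC[OF assms, of y \<eta>] that by (simp add: top_unique)
    then show ?thesis using that esub_top unfolding linpart_def by simp
  qed
  have add: "linpart K (\<lambda>x. \<eta>1 x + \<eta>2 x) y = linpart K \<eta>1 y + linpart K \<eta>2 y" for \<eta>1 \<eta>2 y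
  proof (cases "K (\<lambda>_. 0) y = top")
    case True then show ?thesis using top by simp
  next
    case False
    let ?z = "K (\<lambda>_. 0) y"
    have "?z + (?z + linpart K (\<lambda>x. \<eta>1 x + \<eta>2 x) y) = K (\<lambda>x. \<eta>1 x + \<eta>2 x) y + ?z"
      using decomp[OF assms False, of "\<lambda>x. \<eta>1 x + \<eta>2 x"] by (simp add: add.commute)
    also have "\<dots> = K \<eta>1 y + K \<eta>2 y" by (rule affB[OF assms])
    also have "\<dots> = ?z + (?z + (linpart K \<eta>1 y + linpart K \<eta>2 y))"
      using decomp[OF assms False, of \<eta>1] decomp[OF assms False, of \<eta>2] by (simp add: ac_simps)
    finally show ?thesis using cancel2[OF False] by blast
  qed
  have sc: "linpart K (\<lambda>x. ennreal a * \<eta> x) y = ennreal a * linpart K \<eta> y" if a: "0 \<le> a" for \<eta> a y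
  proof (cases "K (\<lambda>_. 0) y = top")
    case True then show ?thesis using top by simp
  next
    case False
    show ?thesis
    proof (cases "a \<le> 1")
      case True then show ?thesis using scale01[OF assms False a] by simp
    next
      case gt: False
      have "linpart K (\<lambda>x. ennreal (1/a) * (ennreal a * \<eta> x)) y
          = ennreal (1/a) * linpart K (\<lambda>x. ennreal a * \<eta> x) y"
        using gt by (intro scale01[OF assms False]) auto
      moreover have "(\<lambda>x. ennreal (1/a) * (ennreal a * \<eta> x)) = \<eta>"
        using gt by (simp add: mult.assoc[symmetric] ennreal_mult[symmetric])
      ultimately have "linpart K \<eta> y = ennreal (1/a) * linpart K (\<lambda>x. ennreal a * \<eta> x) y"
        by simp
      then have "ennreal a * linpart K \<eta> y = ennreal a * (ennreal (1/a) * linpart K (\<lambda>x. ennreal a * \<eta> x) y)"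
        by simp
      then show ?thesis using inv_cancel[of a] gt by simp
    qed
  qed
  show ?thesis using add sc by (auto simp: fun_eq_iff)
qed

end
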